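(* Let $(\mathscr{C},\mathbb{E},\mathfrak{s})$ be an extriangulated category such that for every object $A$ the morphism $A\to 0$ is an $\mathbb{E}$-inflation and $0\to A$ is an $\mathbb{E}$-deflation, and let $\Sigma$ and $\delta_Y$ be as in the context. Then for all objects $X,Y$ of $\mathscr{C}$, the map $\mathscr{C}(X,\Sigma Y)\to\mathbb{E}(X,Y)$, $\varepsilon\mapsto\varepsilon^*\delta_Y$, is a group isomorphism; in particular $\mathbf{E}^1(X,Y):=\mathscr{C}(X,\Sigma Y)\cong\mathbb{E}(X,Y)$.
   Context: An extriangulated category $(\mathscr{C},\mathbb{E},\mathfrak{s})$ is in the sense of Nakaoka–Palu: $\mathscr{C}$ additive, $\mathbb{E}\colon\mathscr{C}^{\mathrm{op}}\times\mathscr{C}\to Ab$ biadditive, $\mathfrak{s}$ an additive realisation assigning to $\delta\in\mathbb{E}(C,A)$ an equivalence class of sequences $[A\to B\to C]$, satisfying (ET1)–(ET4)$^{\mathrm{op}}$. For $a\colon A\to A'$ and $c\colon C'\to C$ write $a_*\delta=\mathbb{E}(C,a)(\delta)$ and $c^*\delta=\mathbb{E}(c,A)(\delta)$. A morphism $x\colon A\to B$ is an $\mathbb{E}$-inflation if $\mathfrak{s}(\delta)=[A\xrightarrow{x}B\to C]$ for some $\delta\in\mathbb{E}(C,A)$; dually for $\mathbb{E}$-deflations. For each object $Y$, $\Sigma Y$ is a chosen object with $\delta_Y\in\mathbb{E}(\Sigma Y,Y)$ such that $\mathfrak{s}(\delta_Y)=[Y\to 0\to\Sigma Y]$; for $f\colon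 X\to Y$, $\Sigma f$ is the unique morphism $\Sigma X\to\Sigma Y$ with $f_*\delta_X=(\Sigma f)^*\delta_Y$. *)

theory Defs
  imports "HOL-Algebra.Group"
begin

text \<open>
  A category is given by a set of objects Ob, hom-groups Hg A B (abelian groups
  whose carrier is the hom-set C(A,B), group operation = addition of morphisms,
  unit = zero morphism), composition cmp g f (= g o f) and identities idm A.
  The biadditive functor E is given by the abelian groups Eg C A = E(C,A),
  the covariant action epush C A A' a delta = a_* delta (a : A -> A', delta in E(C,A))
  and the contravariant action epull C' C A c delta = c^* delta (c : C' -> C,
  delta in E(C,A)).  The realisation s assigns to delta in E(C,A) the set
  rlz C A delta of triples (B,x,y) representing sequences A -x-> B -y-> C; it is
  required to be exactly one equivalence class of such sequences.
\<close>

record ('o,'m,'e) extri =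
  Ob :: "'o set"
  Hg :: "'o \<Rightarrow> 'o \<Rightarrow> 'm monoid"
  cmp :: "'m \<Rightarrow> 'm \<Rightarrow> 'm"
  idm :: "'o \<Rightarrow> 'm"
  Eg :: "'o \<Rightarrow> 'o \<Rightarrow> 'e monoid"
  epush :: "'o \<Rightarrow> 'o \<Rightarrow> 'o \<Rightarrow> 'm \<Rightarrow> 'e \<Rightarrow> 'e"
  epull :: "'o \<Rightarrow> 'o \<Rightarrow> 'o \<Rightarrow> 'm \<Rightarrow> 'e \<Rightarrow> 'e"
  rlz :: "'o \<Rightarrow> 'o \<Rightarrow> 'e \<Rightarrow> ('o \<times> 'm \<times> 'm) set"

definition Hm :: "('o,'m,'e) extri \<Rightarrow> 'o \<Rightarrow> 'o \<Rightarrow> 'm set" where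
  "Hm X A B = carrier (Hg X A B)"

definition hadd :: "('o,'m,'e) extri \<Rightarrow> 'o \<Rightarrow> 'o \<Rightarrow> 'm \<Rightarrow> 'm \<Rightarrow> 'm" where
  "hadd X A B f g = f \<otimes>\<^bsub>Hg X A B\<^esub> g"

definition zmor :: "('o,'m,'e) extri \<Rightarrow> 'o \<Rightarrow> 'o \<Rightarrow> 'm" where
  "zmor X A B = \<one>\<^bsub>Hg X A B\<^esub>"

definition Ecar :: "('o,'m,'e) extri \<Rightarrow> 'o \<Rightarrow> 'o \<Rightarrow> 'e set" where
  "Ecar X C A = carrier (Eg X C A)"

definition is_iso :: "('o,'m,'e) extri \<Rightarrow> 'o \<Rightarrow> 'o \<Rightarrow> 'm \<Rightarrow> bool" where
  "is_iso X A B f \<longleftrightarrow> f \<in> Hm X A B \<and>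
     (\<exists>g\<in>Hm X B A. cmp X g f = idm X A \<and> cmp X f g = idm X B)"

definition is_zero_obj :: "('o,'m,'e) extri \<Rightarrow> 'o \<Rightarrow> bool" where
  "is_zero_obj X Z \<longleftrightarrow> Z \<in> Ob X \<and>
     (\<forall>A\<in>Ob X. (\<exists>!f. f \<in> Hm X A Z) \<and> (\<exists>!f. f \<in> Hm X Z A))"

definition is_biprod :: "('o,'m,'e) extri \<Rightarrow> 'o \<Rightarrow> 'o \<Rightarrow> 'o \<Rightarrow> 'm \<Rightarrow> 'm \<Rightarrow> 'm \<Rightarrow> 'm \<Rightarrow> bool" where
  "is_biprod X A1 A2 P i1 i2 p1 p2 \<longleftrightarrow> P \<in> Ob X \<and>
     i1 \<in> Hm X A1 P \<and> i2 \<in> Hm X A2 P \<and> p1 \<in> Hm X P A1 \<and> p2 \<in> Hm X P A2 \<and>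
     cmp X p1 i1 = idm X A1 \<and> cmp X p2 i2 = idm X A2 \<and>
     cmp X p1 i2 = zmor X A2 A1 \<and> cmp X p2 i1 = zmor X A1 A2 \<and>
     hadd X P P (cmp X i1 p1) (cmp X i2 p2) = idm X P"

definition additive_cat :: "('o,'m,'e) extri \<Rightarrow> bool" where
  "additive_cat X \<longleftrightarrow>
     (\<forall>A\<in>Ob X. \<forall>B\<in>Ob X. comm_group (Hg X A B)) \<and>
     (\<forall>A\<in>Ob X. idm X A \<in> Hm X A A) \<and>
     (\<forall>A\<in>Ob X. \<forall>B\<in>Ob X. \<forall>C\<in>Ob X. \<forall>f\<in>Hm X A B. \<forall>g\<in>Hm X B C. cmp X g f \<in> Hm X A C) \<and>
     (\<forall>A\<in>Ob X. \<forall>B\<in>Ob X. \<forall>C\<in>Ob X. \<forall>D\<in>Ob X. \<forall>f\<in>Hm X A B. \<forall>g\<in>Hm X B C. \<forall>h\<in>Hm X C D.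
        cmp X h (cmp X g f) = cmp X (cmp X h g) f) \<and>
     (\<forall>A\<in>Ob X. \<forall>B\<in>Ob X. \<forall>f\<in>Hm X A B. cmp X f (idm X A) = f \<and> cmp X (idm X B) f = f) \<and>
     (\<forall>A\<in>Ob X. \<forall>B\<in>Ob X. \<forall>C\<in>Ob X. \<forall>f\<in>Hm X A B. \<forall>f'\<in>Hm X A B. \<forall>g\<in>Hm X B C.
        cmp X g (hadd X A B f f') = hadd X A C (cmp X g f) (cmp X g f')) \<and>
     (\<forall>A\<in>Ob X. \<forall>B\<in>Ob X. \<forall>C\<in>Ob X. \<forall>f\<in>Hm X A B. \<forall>g\<in>Hm X B C. \<forall>g'\<in>Hm X B C.
        cmp X (hadd X B C g g') f = hadd X A C (cmp X g f) (cmp X g' f)) \<and>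
     (\<exists>Z. is_zero_obj X Z) \<and>
     (\<forall>A1\<in>Ob X. \<forall>A2\<in>Ob X. \<exists>P i1 i2 p1 p2. is_biprod X A1 A2 P i1 i2 p1 p2)"

definition biadditive_E :: "('o,'m,'e) extri \<Rightarrow> bool" where
  "biadditive_E X \<longleftrightarrow>
     (\<forall>C\<in>Ob X. \<forall>A\<in>Ob X. comm_group (Eg X C A)) \<and>
     \<comment> \<open>covariant part a_*\<close>
     (\<forall>C\<in>Ob X. \<forall>A\<in>Ob X. \<forall>A'\<in>Ob X. \<forall>a\<in>Hm X A A'.
        epush X C A A' a \<in> hom (Eg X C A) (Eg X C A')) \<and>
     (\<forall>C\<in>Ob X. \<forall>A\<in>Ob X. \<forall>d\<in>Ecar X C A. epush X C A A (idm X A) d = d) \<and>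
     (\<forall>C\<in>Ob X. \<forall>A\<in>Ob X. \<forall>A'\<in>Ob X. \<forall>A''\<in>Ob X. \<forall>a\<in>Hm X A A'. \<forall>b\<in>Hm X A' A''.
        \<forall>d\<in>Ecar X C A. epush X C A A'' (cmp X b a) d = epush X C A' A'' b (epush X C A A' a d)) \<and>
     (\<forall>C\<in>Ob X. \<forall>A\<in>Ob X. \<forall>A'\<in>Ob X. \<forall>a\<in>Hm X A A'. \<forall>a'\<in>Hm X A A'. \<forall>d\<in>Ecar X C A.
        epush X C A A' (hadd X A A' a a') d
          = epush X C A A' a d \<otimes>\<^bsub>Eg X C A'\<^esub> epush X C A A' a' d) \<and>
     \<comment> \<open>contravariant part c^*\<close>
     (\<forall>C'\<in>Ob X. \<forall>C\<in>Ob X. \<forall>A\<in>Ob X. \<forall>c\<in>Hm X C' C.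
        epull X C' C A c \<in> hom (Eg X C A) (Eg X C' A)) \<and>
     (\<forall>C\<in>Ob X. \<forall>A\<in>Ob X. \<forall>d\<in>Ecar X C A. epull X C C A (idm X C) d = d) \<and>
     (\<forall>C''\<in>Ob X. \<forall>C'\<in>Ob X. \<forall>C\<in>Ob X. \<forall>A\<in>Ob X. \<forall>c'\<in>Hm X C'' C'. \<forall>c\<in>Hm X C' C.
        \<forall>d\<in>Ecar X C A. epull X C'' C A (cmp X c c') d = epull X C'' C' A c' (epull X C' C A c d)) \<and>
     (\<forall>C'\<in>Ob X. \<forall>C\<in>Ob X. \<forall>A\<in>Ob X. \<forall>c\<in>Hm X C' C. \<forall>c'\<in>Hm X C' C. \<forall>d\<in>Ecar X C A.
        epull X C' C A (hadd X C' C c c') d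
          = epull X C' C A c d \<otimes>\<^bsub>Eg X C' A\<^esub> epull X C' C A c' d) \<and>
     \<comment> \<open>bifunctoriality\<close>
     (\<forall>C'\<in>Ob X. \<forall>C\<in>Ob X. \<forall>A\<in>Ob X. \<forall>A'\<in>Ob X. \<forall>c\<in>Hm X C' C. \<forall>a\<in>Hm X A A'. \<forall>d\<in>Ecar X C A.
        epush X C' A A' a (epull X C' C A c d) = epull X C' C A' c (epush X C A A' a d))"

definition seq_equiv :: "('o,'m,'e) extri \<Rightarrow> 'o \<times> 'm \<times> 'm \<Rightarrow> 'o \<times> 'm \<times> 'm \<Rightarrow> bool" where
  "seq_equiv X s t = (case s of (B,x,y) \<Rightarrow> case t of (B',x',y') \<Rightarrow>
     (\<exists>b. is_iso X B B' b \<and> cmp X b x = x' \<and> cmp X y' b = y))"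

definition realisation_wf :: "('o,'m,'e) extri \<Rightarrow> bool" where
  "realisation_wf X \<longleftrightarrow>
     (\<forall>C\<in>Ob X. \<forall>A\<in>Ob X. \<forall>d\<in>Ecar X C A.
        rlz X C A d \<noteq> {} \<and>
        (\<forall>(B,x,y)\<in>rlz X C A d. B \<in> Ob X \<and> x \<in> Hm X A B \<and> y \<in> Hm X B C) \<and>
        (\<forall>s\<in>rlz X C A d. \<forall>B'\<in>Ob X. \<forall>x'\<in>Hm X A B'. \<forall>y'\<in>Hm X B' C.
            ((B',x',y') \<in> rlz X C A d \<longleftrightarrow> seq_equiv X s (B',x',y'))))"

definition is_realisation :: "('o,'m,'e) extri \<Rightarrow> bool" where
  "is_realisation X \<longleftrightarrow>
     (\<forall>A\<in>Ob X. \<forall>C\<in>Ob X. \<forall>A'\<in>Ob X. \<forall>C'\<in>Ob X. \<forall>d\<in>Ecar X C A. \<forall>d'\<in>Ecar X C' A'.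
      \<forall>a\<in>Hm X A A'. \<forall>c\<in>Hm X C C'. \<forall>B x y B' x' y'.
        epush X C A A' a d = epull X C C' A' c d' \<longrightarrow>
        (B,x,y) \<in> rlz X C A d \<longrightarrow> (B',x',y') \<in> rlz X C' A' d' \<longrightarrow>
        (\<exists>b\<in>Hm X B B'. cmp X b x = cmp X x' a \<and> cmp X y' b = cmp X c y))"

text \<open>(ET2), second half: s is additive.  The element delta (+) delta' of
  E(C(+)C', A(+)A') is (i_A)_*(p_C)^*delta + (i_A')_*(p_C')^*delta'.\<close>
definition additive_realisation :: "('o,'m,'e) extri \<Rightarrow> bool" where
  "additive_realisation X \<longleftrightarrow>
     (\<forall>A\<in>Ob X. \<forall>C\<in>Ob X. \<forall>P iA iC pA pC. is_biprod X A C P iA iC pA pC \<longrightarrow>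
        (P, iA, pC) \<in> rlz X C A (\<one>\<^bsub>Eg X C A\<^esub>)) \<and>
     (\<forall>A\<in>Ob X. \<forall>C\<in>Ob X. \<forall>A'\<in>Ob X. \<forall>C'\<in>Ob X. \<forall>d\<in>Ecar X C A. \<forall>d'\<in>Ecar X C' A'.
      \<forall>B x y B' x' y' PA iA iA' pA pA' PB iB iB' pB pB' PC iC iC' pC pC'.
        (B,x,y) \<in> rlz X C A d \<longrightarrow> (B',x',y') \<in> rlz X C' A' d' \<longrightarrow>
        is_biprod X A A' PA iA iA' pA pA' \<longrightarrow>
        is_biprod X B B' PB iB iB' pB pB' \<longrightarrow>
        is_biprod X C C' PC iC iC' pC pC' \<longrightarrow>
        (PB, hadd X PA PB (cmp X iB (cmp X x pA)) (cmp X iB' (cmp X x' pA')),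
             hadd X PB PC (cmp X iC (cmp X y pB)) (cmp X iC' (cmp X y' pB')))
          \<in> rlz X PC PA (epush X PC A PA iA (epull X PC C A pC d)
                          \<otimes>\<^bsub>Eg X PC PA\<^esub> epush X PC A' PA iA' (epull X PC C' A' pC' d')))"

definition ET3 :: "('o,'m,'e) extri \<Rightarrow> bool" where
  "ET3 X \<longleftrightarrow>
     (\<forall>A\<in>Ob X. \<forall>C\<in>Ob X. \<forall>A'\<in>Ob X. \<forall>C'\<in>Ob X. \<forall>d\<in>Ecar X C A. \<forall>d'\<in>Ecar X C' A'.
      \<forall>B x y B' x' y' a b.
        (B,x,y) \<in> rlz X C A d \<longrightarrow> (B',x',y') \<in> rlz X C' A' d' \<longrightarrow>
        a \<in> Hm X A A' \<longrightarrow> b \<in> Hm X B B' \<longrightarrow> cmp X b x = cmp X x' a \<longrightarrow>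
        (\<exists>c\<in>Hm X C C'. cmp X c y = cmp X y' b \<and> epush X C A A' a d = epull X C C' A' c d'))"

definition ET3op :: "('o,'m,'e) extri \<Rightarrow> bool" where
  "ET3op X \<longleftrightarrow>
     (\<forall>A\<in>Ob X. \<forall>C\<in>Ob X. \<forall>A'\<in>Ob X. \<forall>C'\<in>Ob X. \<forall>d\<in>Ecar X C A. \<forall>d'\<in>Ecar X C' A'.
      \<forall>B x y B' x' y' b c.
        (B,x,y) \<in> rlz X C A d \<longrightarrow> (B',x',y') \<in> rlz X C' A' d' \<longrightarrow>
        b \<in> Hm X B B' \<longrightarrow> c \<in> Hm X C C' \<longrightarrow> cmp X c y = cmp X y' b \<longrightarrow>
        (\<exists>a\<in>Hm X A A'. cmp X b x = cmp X x' a \<and> epush X C A A' a d = epull X C C' A' c d'))"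

definition ET4 :: "('o,'m,'e) extri \<Rightarrow> bool" where
  "ET4 X \<longleftrightarrow>
     (\<forall>A\<in>Ob X. \<forall>B\<in>Ob X. \<forall>C\<in>Ob X. \<forall>D\<in>Ob X. \<forall>F\<in>Ob X.
      \<forall>d\<in>Ecar X D A. \<forall>d'\<in>Ecar X F B. \<forall>f f' g g'.
        (B,f,f') \<in> rlz X D A d \<longrightarrow> (C,g,g') \<in> rlz X F B d' \<longrightarrow>
        (\<exists>E\<in>Ob X. \<exists>h'\<in>Hm X C E. \<exists>dm\<in>Hm X D E. \<exists>e\<in>Hm X E F. \<exists>d''\<in>Ecar X E A.
           cmp X dm f' = cmp X h' g \<and> cmp X e h' = g' \<and>
           (C, cmp X g f, h') \<in> rlz X E A d'' \<and>
           (E, dm, e) \<in> rlz X F D (epush X F B D f' d') \<and>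
           epull X D E A dm d'' = d \<and>
           epush X E A B f d'' = epull X E F B e d'))"

definition ET4op :: "('o,'m,'e) extri \<Rightarrow> bool" where
  "ET4op X \<longleftrightarrow>
     (\<forall>A\<in>Ob X. \<forall>B\<in>Ob X. \<forall>C\<in>Ob X. \<forall>D\<in>Ob X. \<forall>F\<in>Ob X.
      \<forall>d\<in>Ecar X B D. \<forall>d'\<in>Ecar X F C. \<forall>f f' g g'.
        (A,f,f') \<in> rlz X B D d \<longrightarrow> (B,g,g') \<in> rlz X F C d' \<longrightarrow>
        (\<exists>E\<in>Ob X. \<exists>dm\<in>Hm X D E. \<exists>e\<in>Hm X E C. \<exists>h\<in>Hm X E A. \<exists>d''\<in>Ecar X F E.
           cmp X h dm = f \<and> cmp X f' h = cmp X g e \<and>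
           (E, h, cmp X g' f') \<in> rlz X F E d'' \<and>
           (E, dm, e) \<in> rlz X C D (epull X C B D g d) \<and>
           epush X F E C e d'' = d' \<and>
           epush X B D E dm d = epull X B F E g' d''))"

definition extriangulated :: "('o,'m,'e) extri \<Rightarrow> bool" where
  "extriangulated X \<longleftrightarrow> additive_cat X \<and> biadditive_E X \<and> realisation_wf X \<and>
     is_realisation X \<and> additive_realisation X \<and> ET3 X \<and> ET3op X \<and> ET4 X \<and> ET4op X"

definition is_inflation :: "('o,'m,'e) extri \<Rightarrow> 'o \<Rightarrow> 'o \<Rightarrow> 'm \<Rightarrow> bool" where
  "is_inflation X A B x \<longleftrightarrow> x \<in> Hm X A B \<and>
     (\<exists>C\<in>Ob X. \<exists>d\<in>Ecar X C A. \<exists>y. (B,x,y) \<in> rlz X C A d)"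

definition is_deflation :: "('o,'m,'e) extri \<Rightarrow> 'o \<Rightarrow> 'o \<Rightarrow> 'm \<Rightarrow> bool" where
  "is_deflation X B C y \<longleftrightarrow> y \<in> Hm X B C \<and>
     (\<exists>A\<in>Ob X. \<exists>d\<in>Ecar X C A. \<exists>x. (B,x,y) \<in> rlz X C A d)"

end

theory Submission
  imports Defs
begin

lemma grp_idem_one: "group G \<Longrightarrow> x \<in> carrier G \<Longrightarrow> x \<otimes>\<^bsub>G\<^esub> x = x \<Longrightarrow> x = \<one>\<^bsub>G\<^esub>"
  by (metis group.l_cancel_one' group.r_inv monoid.r_one group.is_monoid)

theorem lemma3p8:
  fixes X :: "('o,'m,'e) extri" and Z :: 'o and Sig :: "'o \<Rightarrow> 'o" and dl :: "'o \<Rightarrow> 'e"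
    and Xo Y :: 'o
  assumes "extriangulated X"
    and "is_zero_obj X Z"
    and "\<forall>A\<in>Ob X. is_inflation X A Z (zmor X A Z)"
    and "\<forall>A\<in>Ob X. is_deflation X Z A (zmor X Z A)"
    and "\<forall>W\<in>Ob X. Sig W \<in> Ob X \<and> dl W \<in> Ecar X (Sig W) W \<and>
           (Z, zmor X W Z, zmor X Z (Sig W)) \<in> rlz X (Sig W) W (dl W)"
    and "Xo \<in> Ob X" and "Y \<in> Ob X"
  shows "(\<lambda>\<epsilon>. epull X Xo (Sig Y) Y \<epsilon> (dl Y)) \<in> iso (Hg X Xo (Sig Y)) (Eg X Xo Y)"
proof -
  note ext = assms(1)[unfolded extriangulated_def]
  have AC: "additive_cat X" and BE: "biadditive_E X" and RW: "realisation_wf X"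
    and IR: "is_realisation X" and AR: "additive_realisation X" and E3: "ET3 X"
    using ext by auto
  have Z: "Z \<in> Ob X" using assms(2) unfolding is_zero_obj_def by auto
  have zuniq: "\<And>A f g. A \<in> Ob X \<Longrightarrow> f \<in> Hm X A Z \<Longrightarrow> g \<in> Hm X A Z \<Longrightarrow> f = g"
    using assms(2) unfolding is_zero_obj_def by metis
  have cg: "\<And>A B. A \<in> Ob X \<Longrightarrow> B \<in> Ob X \<Longrightarrow> comm_group (Hg X A B)"
    using AC unfolding additive_cat_def by auto
  have zm: "\<And>A B. A \<in> Ob X \<Longrightarrow> B \<in> Ob X \<Longrightarrow> zmor X A B \<in> Hm X A B"
    using cg unfolding zmor_def Hm_def by (meson comm_group.axioms(2) group.is_monoid monoid.one_closed)
  have idm: "\<And>A. A \<in> Ob X \<Longrightarrow> idm X A \<in> Hm X A A"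
    using AC unfolding additive_cat_def by auto
  have cmpc: "\<And>A B C f g. A \<in> Ob X \<Longrightarrow> B \<in> Ob X \<Longrightarrow> C \<in> Ob X \<Longrightarrow> f \<in> Hm X A B \<Longrightarrow> g \<in> Hm X B C \<Longrightarrow> cmp X g f \<in> Hm X A C"
    using AC unfolding additive_cat_def by auto
  have assoc: "\<And>A B C D f g h. A \<in> Ob X \<Longrightarrow> B \<in> Ob X \<Longrightarrow> C \<in> Ob X \<Longrightarrow> D \<in> Ob X \<Longrightarrow> f \<in> Hm X A B \<Longrightarrow> g \<in> Hm X B C \<Longrightarrow> h \<in> Hm X C D \<Longrightarrow>
        cmp X h (cmp X g f) = cmp X (cmp X h g) f"
    using AC unfolding additive_cat_def by auto
  have idr: "\<And>A B f. A \<in> Ob X \<Longrightarrow> B \<in> Ob X \<Longrightarrow> f \<in> Hm X A B \<Longrightarrow> cmp X f (idm X A) = f \<and> cmp X (idm X B) f = f"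
    using AC unfolding additive_cat_def by auto
  have distr: "\<And>A B C f g g'. A \<in> Ob X \<Longrightarrow> B \<in> Ob X \<Longrightarrow> C \<in> Ob X \<Longrightarrow> f \<in> Hm X A B \<Longrightarrow> g \<in> Hm X B C \<Longrightarrow> g' \<in> Hm X B C \<Longrightarrow>
        cmp X (hadd X B C g g') f = hadd X A C (cmp X g f) (cmp X g' f)"
    using AC unfolding additive_cat_def by auto
  have zcmp: "\<And>A B C f. A \<in> Ob X \<Longrightarrow> B \<in> Ob X \<Longrightarrow> C \<in> Ob X \<Longrightarrow> f \<in> Hm X A B \<Longrightarrow> cmp X (zmor X B C) f = zmor X A C"
  proof -
    fix A B C f assume a: "A \<in> Ob X" "B \<in> Ob X" "C \<in> Ob X" "f \<in> Hm X A B"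
    have g: "group (Hg X B C)" "group (Hg X A C)" using cg a comm_group.axioms(2) by blast+
    have "hadd X B C (zmor X B C) (zmor X B C) = zmor X B C"
      unfolding hadd_def zmor_def using g(1) by (simp add: group.is_monoid monoid.l_one)
    hence "cmp X (zmor X B C) f = hadd X A C (cmp X (zmor X B C) f) (cmp X (zmor X B C) f)"
      using distr[OF a(1,2,3,4) zm[OF a(2,3)] zm[OF a(2,3)]] by simp
    moreover have "cmp X (zmor X B C) f \<in> carrier (Hg X A C)"
      using cmpc[OF a(1,2,3,4) zm[OF a(2,3)]] unfolding Hm_def .
    ultimately show "cmp X (zmor X B C) f = zmor X A C"
      unfolding hadd_def zmor_def using grp_idem_one[OF g(2)] by metis
  qed
  have SY: "Sig Y \<in> Ob X" and dlY: "dl Y \<in> Ecar X (Sig Y) Y"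
    and rY: "(Z, zmor X Y Z, zmor X Z (Sig Y)) \<in> rlz X (Sig Y) Y (dl Y)"
    using assms(5,7) by auto
  have pushid: "\<forall>C\<in>Ob X. \<forall>A\<in>Ob X. \<forall>d\<in>Ecar X C A. epush X C A A (idm X A) d = d"
    using BE unfolding biadditive_E_def by (elim conjE)
  define h where "h = (\<lambda>\<epsilon>. epull X Xo (Sig Y) Y \<epsilon> (dl Y))"
  have G: "group (Hg X Xo (Sig Y))" using cg[OF assms(6) SY] comm_group.axioms(2) by blast
  have H: "group (Eg X Xo Y)" using BE assms(6,7) unfolding biadditive_E_def
    by (meson comm_group.axioms(2))
  have pullhom: "\<And>c. c \<in> Hm X Xo (Sig Y) \<Longrightarrow> epull X Xo (Sig Y) Y c \<in> hom (Eg X (Sig Y) Y) (Eg X Xo Y)"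
  proof -
    fix c assume c: "c \<in> Hm X Xo (Sig Y)"
    have "\<forall>C'\<in>Ob X. \<forall>C\<in>Ob X. \<forall>A\<in>Ob X. \<forall>c\<in>Hm X C' C.
        epull X C' C A c \<in> hom (Eg X C A) (Eg X C' A)"
      using BE unfolding biadditive_E_def by (elim conjE)
    thus "epull X Xo (Sig Y) Y c \<in> hom (Eg X (Sig Y) Y) (Eg X Xo Y)" using assms(6,7) SY c by blast
  qed
  have hcar: "\<And>c. c \<in> Hm X Xo (Sig Y) \<Longrightarrow> h c \<in> carrier (Eg X Xo Y)"
    unfolding h_def using pullhom dlY unfolding Ecar_def hom_def by blast
  have hadd_pull: "\<And>c c'. c \<in> Hm X Xo (Sig Y) \<Longrightarrow> c' \<in> Hm X Xo (Sig Y) \<Longrightarrow>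
      h (hadd X Xo (Sig Y) c c') = h c \<otimes>\<^bsub>Eg X Xo Y\<^esub> h c'"
    unfolding h_def using BE assms(6,7) SY dlY unfolding biadditive_E_def by blast
  have hom: "h \<in> hom (Hg X Xo (Sig Y)) (Eg X Xo Y)"
    using hcar hadd_pull unfolding hom_def Hm_def hadd_def by auto
  have GH: "group_hom (Hg X Xo (Sig Y)) (Eg X Xo Y) h"
    using G H hom by (simp add: group_hom_def group_hom_axioms_def)
  have ker: "\<And>c. c \<in> Hm X Xo (Sig Y) \<Longrightarrow> h c = \<one>\<^bsub>Eg X Xo Y\<^esub> \<Longrightarrow> c = zmor X Xo (Sig Y)"
  proof -
    fix c assume c: "c \<in> Hm X Xo (Sig Y)" and hc: "h c = \<one>\<^bsub>Eg X Xo Y\<^esub>"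
    have "\<forall>A1\<in>Ob X. \<forall>A2\<in>Ob X. \<exists>P i1 i2 p1 p2. is_biprod X A1 A2 P i1 i2 p1 p2"
      using AC unfolding additive_cat_def by (elim conjE)
    then obtain P iY iX pY pX where bp: "is_biprod X Y Xo P iY iX pY pX"
      using assms(6,7) by blast
    have P: "P \<in> Ob X" and iX: "iX \<in> Hm X Xo P" and pX: "pX \<in> Hm X P Xo"
      and pi: "cmp X pX iX = idm X Xo"
      using bp unfolding is_biprod_def by auto
    have r0: "(P, iY, pX) \<in> rlz X Xo Y (\<one>\<^bsub>Eg X Xo Y\<^esub>)"
      using AR bp assms(6,7) unfolding additive_realisation_def by blast
    have one: "\<one>\<^bsub>Eg X Xo Y\<^esub> \<in> Ecar X Xo Y" unfolding Ecar_def using H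
      by (simp add: group.is_monoid monoid.one_closed)
    have "epush X Xo Y Y (idm X Y) (\<one>\<^bsub>Eg X Xo Y\<^esub>) = \<one>\<^bsub>Eg X Xo Y\<^esub>"
      using pushid assms(6,7) one by blast
    hence eq: "epush X Xo Y Y (idm X Y) (\<one>\<^bsub>Eg X Xo Y\<^esub>) = epull X Xo (Sig Y) Y c (dl Y)"
      using hc unfolding h_def by simp
    obtain b where b: "b \<in> Hm X P Z" and bc: "cmp X (zmor X Z (Sig Y)) b = cmp X c pX"
      using IR[unfolded is_realisation_def, rule_format, OF assms(7,6,7) SY one dlY idm[OF assms(7)] c eq r0 rY]
      by blast
    have "c = cmp X c (cmp X pX iX)" using pi idr[OF assms(6) SY c] by simp
    also have "\<dots> = cmp X (cmp X c pX) iX" using assoc[OF assms(6) P assms(6) SY iX pX c] .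
    also have "\<dots> = cmp X (zmor X P (Sig Y)) iX" using bc zcmp[OF P Z SY b] by simp
    also have "\<dots> = zmor X Xo (Sig Y)" using zcmp[OF assms(6) P SY iX] .
    finally show "c = zmor X Xo (Sig Y)" .
  qed
  have inj: "inj_on h (carrier (Hg X Xo (Sig Y)))"
  proof (rule inj_onI)
    fix c c' assume c: "c \<in> carrier (Hg X Xo (Sig Y))" and c': "c' \<in> carrier (Hg X Xo (Sig Y))"
      and e: "h c = h c'"
    let ?G = "Hg X Xo (Sig Y)"
    have m: "c \<otimes>\<^bsub>?G\<^esub> inv\<^bsub>?G\<^esub> c' \<in> carrier ?G" using G c c' by (meson group.inv_closed group.subgroup_self subgroup.m_closed)
    have "h (c \<otimes>\<^bsub>?G\<^esub> inv\<^bsub>?G\<^esub> c') = \<one>\<^bsub>Eg X Xo Y\<^esub>"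
    proof -
      have "h (c \<otimes>\<^bsub>?G\<^esub> inv\<^bsub>?G\<^esub> c') = h c \<otimes>\<^bsub>Eg X Xo Y\<^esub> h (inv\<^bsub>?G\<^esub> c')"
        using group_hom.hom_mult[OF GH c] G c' by (meson group.inv_closed)
      also have "\<dots> = h c' \<otimes>\<^bsub>Eg X Xo Y\<^esub> inv\<^bsub>Eg X Xo Y\<^esub> (h c')"
        using group_hom.hom_inv[OF GH c'] e by simp
      also have "\<dots> = \<one>\<^bsub>Eg X Xo Y\<^esub>" using H hcar c' unfolding Hm_def by (simp add: group.r_inv)
      finally show ?thesis .
    qed
    hence "c \<otimes>\<^bsub>?G\<^esub> inv\<^bsub>?G\<^esub> c' = \<one>\<^bsub>?G\<^esub>" using ker[of "c \<otimes>\<^bsub>?G\<^esub> inv\<^bsub>?G\<^esub> c'"] m unfolding Hm_def zmor_def by blast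
    hence "inv\<^bsub>?G\<^esub> (inv\<^bsub>?G\<^esub> c') = c" by (rule group.inv_equality[OF G _ group.inv_closed[OF G c'] c])
    thus "c = c'" using group.inv_inv[OF G c'] by simp
  qed
  have surj: "h ` carrier (Hg X Xo (Sig Y)) = carrier (Eg X Xo Y)"
  proof
    show "h ` carrier (Hg X Xo (Sig Y)) \<subseteq> carrier (Eg X Xo Y)" using hcar unfolding Hm_def by auto
  next
    show "carrier (Eg X Xo Y) \<subseteq> h ` carrier (Hg X Xo (Sig Y))"
    proof
      fix d assume d: "d \<in> carrier (Eg X Xo Y)"
      hence dE: "d \<in> Ecar X Xo Y" unfolding Ecar_def .
      have rw: "rlz X Xo Y d \<noteq> {} \<and> (\<forall>(B,x,y)\<in>rlz X Xo Y d. B \<in> Ob X \<and> x \<in> Hm X Y B \<and> y \<in> Hm X B Xo)"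
        using RW[unfolded realisation_wf_def, rule_format, OF assms(6,7) dE] by (elim conjE) (intro conjI)
      then obtain t where t: "t \<in> rlz X Xo Y d" by blast
      obtain B x y where txy: "t = (B,x,y)" by (cases t) auto
      have r: "(B,x,y) \<in> rlz X Xo Y d" using t txy by simp
      have B: "B \<in> Ob X" and x: "x \<in> Hm X Y B"
        using rw r by auto
      have bx: "cmp X (zmor X B Z) x = cmp X (zmor X Y Z) (idm X Y)"
        using zuniq[OF assms(7) cmpc[OF assms(7) B Z x zm[OF B Z]] cmpc[OF assms(7) assms(7) Z idm[OF assms(7)] zm[OF assms(7) Z]]] .
      obtain c where c: "c \<in> Hm X Xo (Sig Y)" and ce: "epush X Xo Y Y (idm X Y) d = epull X Xo (Sig Y) Y c (dl Y)"
        using E3[unfolded ET3_def, rule_format, OF assms(7,6,7) SY dE dlY r rY idm[OF assms(7)] zm[OF B Z] bx]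
        by blast
      have "epush X Xo Y Y (idm X Y) d = d" using pushid assms(6,7) dE by blast
      hence "d = h c" using ce unfolding h_def by simp
      thus "d \<in> h ` carrier (Hg X Xo (Sig Y))" using c unfolding Hm_def by blast
    qed
  qed
  have "h \<in> iso (Hg X Xo (Sig Y)) (Eg X Xo Y)" using hom inj surj unfolding iso_def bij_betw_def by blast
  thus ?thesis unfolding h_def .
qed

end
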